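(* Let $S=\mathbb{R}$ or $S=\mathbb{C}$ and let $X$ be a vector space over $S$, viewed as an algebra $a\colon\mathcal{M}_S(X)\to X$ of the multiset monad ($a(\sum_j s_jx_j)=\sum_j s_j\cdot x_j$). Then $\overline{\mathcal{M}_S}$-coalgebras (bases in the coalgebraic sense) on $X$ correspond bijectively to Hamel bases of $X$: a Hamel basis $B$ gives the coalgebra $b(x)=\sum_j s_j a_j$, where $x=\sum_j s_j\cdot a_j$ is the unique expansion of $x$ with $a_j\in B$; conversely, for a coalgebra $b$ the set $X_b=\{x\in X\mid b(x)=1x\}$ is a Hamel basis of $X$, and $b$ is the coordinate-expansion map with respect to it.
   Context: For a semiring $S$, the multiset monad $\mathcal{M}_S$ on $\mathbf{Sets}$ is $\mathcal{M}_S(X)=\{\varphi\colon X\to S\mid \mathrm{supp}(\varphi)\text{ finite}\}$, written as formal finite sums $\sum_i s_ix_i$; unit $\eta(x)=1x$; multiplication $\mu(\sum_i s_i\varphi_i)(x)=\sum_i s_i\cdot\varphi_i(x)$. Its Eilenberg–Moore algebras are $S$-modules. The induced comonad $\overline{\mathcal{M}_S}$ on modules sends a module $X$ to the free module $\mathcal{M}_S(X)$ on its underlying set, with counit $\varepsilon(\sum_j s_jx_j)=\sum_j s_j\cdot x_j$ (the actual sum in $X$) and comultiplication $\delta(\sum_j s_jx_j)=\sum_j s_j(1x_j)$. A $\overline{\mathcal{M}_S}$-coalgebra on $X$ is a module map $b\colon X\to\mathcal{M}_S(X)$ with $\varepsilon\circ b=\mathrm{id}$ and $\delta\circ b=\mathcal{M}_S(b)\circ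 b$. *)

theory Defs
  imports Complex_Main
begin

text \<open>Multiset monad M_S on Sets: elements of M_S(X) are finitely supported
functions X \<Rightarrow> S, represented as plain functions together with finiteness of support.\<close>

definition ms_supp :: "('x \<Rightarrow> 's::zero) \<Rightarrow> 'x set" where
  "ms_supp \<phi> = {x. \<phi> x \<noteq> 0}"

definition ms_finite :: "('x \<Rightarrow> 's::zero) \<Rightarrow> bool" where
  "ms_finite \<phi> \<longleftrightarrow> finite (ms_supp \<phi>)"

definition ms_unit :: "'x \<Rightarrow> ('x \<Rightarrow> 's::{zero,one})" where
  "ms_unit x = (\<lambda>y. if y = x then 1 else 0)"

definition ms_map :: "('x \<Rightarrow> 'y) \<Rightarrow> ('x \<Rightarrow> 's::comm_monoid_add) \<Rightarrow> ('y \<Rightarrow> 's)" where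
  "ms_map f \<phi> = (\<lambda>y. \<Sum>x\<in>{x. \<phi> x \<noteq> 0 \<and> f x = y}. \<phi> x)"

text \<open>Counit of the comonad on modules: the algebra map a(sum_j s_j x_j) = sum_j s_j . x_j\<close>
definition ms_counit :: "('s \<Rightarrow> 'v \<Rightarrow> 'v) \<Rightarrow> ('v \<Rightarrow> 's::zero) \<Rightarrow> 'v::comm_monoid_add" where
  "ms_counit scale \<phi> = (\<Sum>x\<in>ms_supp \<phi>. scale (\<phi> x) x)"

text \<open>Comultiplication delta(sum_j s_j x_j) = sum_j s_j (1 x_j)\<close>
definition ms_comult :: "('v \<Rightarrow> 's::{zero,one}) \<Rightarrow> (('v \<Rightarrow> 's) \<Rightarrow> 's)" where
  "ms_comult \<phi> = (\<lambda>\<psi>. if \<exists>x. \<psi> = ms_unit x then \<phi> (THE x. \<psi> = ms_unit x) else 0)"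

text \<open>A coalgebra of the induced comonad on the module X (scalar multiplication scale):
a module map b : X \<rightarrow> M_S(X) (pointwise module structure on M_S(X)) with
counit o b = id and comult o b = M_S(b) o b.\<close>
definition ms_coalgebra :: "('s::comm_ring_1 \<Rightarrow> 'v \<Rightarrow> 'v) \<Rightarrow> ('v::ab_group_add \<Rightarrow> ('v \<Rightarrow> 's)) \<Rightarrow> bool" where
  "ms_coalgebra scale b \<longleftrightarrow>
     (\<forall>x. ms_finite (b x)) \<and>
     (\<forall>x y. b (x + y) = (\<lambda>z. b x z + b y z)) \<and>
     (\<forall>c x. b (scale c x) = (\<lambda>z. c * b x z)) \<and>
     (\<forall>x. ms_counit scale (b x) = x) \<and>
     (\<forall>x. ms_comult (b x) = ms_map b (b x))"

definition hamel_basis :: "('s::comm_ring_1 \<Rightarrow> 'v \<Rightarrow> 'v) \<Rightarrow> 'v::ab_group_add set \<Rightarrow> bool" where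
  "hamel_basis scale B \<longleftrightarrow> \<not> module.dependent scale B \<and> module.span scale B = UNIV"

definition basis_coalg :: "('s::comm_ring_1 \<Rightarrow> 'v \<Rightarrow> 'v) \<Rightarrow> 'v::ab_group_add set \<Rightarrow> 'v \<Rightarrow> ('v \<Rightarrow> 's)" where
  "basis_coalg scale B = module.representation scale B"

definition coalg_basis :: "('v \<Rightarrow> ('v \<Rightarrow> 's::{zero,one})) \<Rightarrow> 'v set" where
  "coalg_basis b = {x. b x = ms_unit x}"

end

theory Submission
  imports Defs
begin

lemma ms_unit_inj: "(ms_unit x :: 'x \<Rightarrow> 's::zero_neq_one) = ms_unit y \<longleftrightarrow> x = y"
  unfolding ms_unit_def by (metis one_neq_zero)

lemma ms_unit_apply: "ms_unit x y = (if y = x then 1 else 0)"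
  by (simp add: ms_unit_def)

context vector_space
begin

lemma counit_unit: "ms_counit scale (ms_unit y) = y"
proof -
  have "ms_supp (ms_unit y :: 'b \<Rightarrow> 'a) = {y}" by (auto simp: ms_supp_def ms_unit_def)
  then show ?thesis by (simp add: ms_counit_def ms_unit_def)
qed

lemma partA:
  assumes "hamel_basis scale B"
  shows "ms_coalgebra scale (representation B)"
proof -
  have ind: "independent B" and sp: "\<And>x. x \<in> span B" using assms by (auto simp: hamel_basis_def)
  have repb: "\<And>z. z \<in> B \<Longrightarrow> representation B z = ms_unit z"
    using representation_basis[OF ind] by (auto simp: ms_unit_def)
  show ?thesis unfolding ms_coalgebra_def
  proof (intro conjI allI)
    fix x show "ms_finite (representation B x)"
      by (simp add: ms_finite_def ms_supp_def finite_representation)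
  next
    fix x y show "representation B (x + y) = (\<lambda>z. representation B x z + representation B y z)"
      by (rule representation_add[OF ind sp sp])
  next
    fix c x show "representation B (c *s x) = (\<lambda>z. c * representation B x z)"
      by (rule representation_scale[OF ind sp])
  next
    fix x show "ms_counit scale (representation B x) = x"
      unfolding ms_counit_def ms_supp_def by (rule sum_nonzero_representation_eq[OF ind sp])
  next
    fix x
    let ?r = "representation B x"
    show "ms_comult ?r = ms_map (representation B) ?r"
    proof
      fix \<psi>
      have S: "{z. ?r z \<noteq> 0 \<and> representation B z = \<psi>} = {z. ?r z \<noteq> 0 \<and> ms_unit z = \<psi>}"
        using repb representation_ne_zero by auto
      show "ms_comult ?r \<psi> = ms_map (representation B) ?r \<psi>"
      proof (cases "\<exists>y. \<psi> = ms_unit y")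
        case True
        then obtain y where y: "\<psi> = ms_unit y" by blast
        have "{z. ?r z \<noteq> 0 \<and> ms_unit z = \<psi>} = (if ?r y = 0 then {} else {y})"
          using y by (auto simp: ms_unit_inj)
        moreover have "(THE x. \<psi> = ms_unit x) = y" using y by (auto simp: ms_unit_inj)
        ultimately show ?thesis using True unfolding ms_comult_def ms_map_def S by auto
      next
        case False
        hence E: "{z. ?r z \<noteq> 0 \<and> ms_unit z = \<psi>} = {}" by auto
        have "ms_map (representation B) ?r \<psi> = 0" unfolding ms_map_def S E by simp
        moreover have "ms_comult ?r \<psi> = 0" using False by (simp add: ms_comult_def)
        ultimately show ?thesis by simp
      qed
    qed
  qed
qed

lemma partB:
  assumes "hamel_basis scale B"
  shows "coalg_basis (representation B) = B"
proof -
  have ind: "independent B" using assms by (auto simp: hamel_basis_def)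
  have repb: "\<And>z. z \<in> B \<Longrightarrow> representation B z = ms_unit z"
    using representation_basis[OF ind] by (auto simp: ms_unit_def)
  show ?thesis
  proof (auto simp: coalg_basis_def repb)
    fix x assume "representation B x = ms_unit x"
    hence "representation B x x \<noteq> 0" by (simp add: ms_unit_def)
    thus "x \<in> B" by (rule representation_ne_zero)
  qed
qed

lemma partC:
  assumes cb: "ms_coalgebra scale b"
  shows "hamel_basis scale (coalg_basis b) \<and> b = representation (coalg_basis b)"
proof -
  have fin: "\<And>x. finite {z. b x z \<noteq> 0}" using cb by (auto simp: ms_coalgebra_def ms_finite_def ms_supp_def)
  have add: "\<And>x y. b (x + y) = (\<lambda>z. b x z + b y z)" using cb by (auto simp: ms_coalgebra_def)
  have scl: "\<And>c x. b (c *s x) = (\<lambda>z. c * b x z)" using cb by (auto simp: ms_coalgebra_def)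
  have cou: "\<And>x. ms_counit scale (b x) = x" using cb by (auto simp: ms_coalgebra_def)
  have com: "\<And>x. ms_comult (b x) = ms_map b (b x)" using cb by (auto simp: ms_coalgebra_def)
  have injb: "\<And>x y. b x = b y \<Longrightarrow> x = y" using cou by metis
  have b0: "b 0 = (\<lambda>z. 0)"
  proof
    fix z have "b 0 z = b 0 z + b 0 z" using add[of 0 0] by (metis add.right_neutral)
    hence "b 0 z + 0 = b 0 z + b 0 z" by simp
    thus "b 0 z = 0" by (metis add_left_cancel)
  qed
  have bsum: "\<And>f I. b (\<Sum>i\<in>I. f i) = (\<lambda>z. \<Sum>i\<in>I. b (f i) z)"
  proof -
    fix f :: "'c \<Rightarrow> 'b" and I
    show "b (\<Sum>i\<in>I. f i) = (\<lambda>z. \<Sum>i\<in>I. b (f i) z)"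
      by (induction I rule: infinite_finite_induct) (auto simp: b0 add)
  qed
  have supp: "\<And>x z. b x z \<noteq> 0 \<Longrightarrow> b z = ms_unit z"
  proof -
    fix x z assume nz: "b x z \<noteq> 0"
    have "{w. b x w \<noteq> 0 \<and> b w = b z} = {z}" using nz injb by auto
    hence "ms_map b (b x) (b z) = b x z" by (simp add: ms_map_def)
    hence "ms_comult (b x) (b z) \<noteq> 0" using com nz by simp
    then obtain y where y: "b z = ms_unit y" unfolding ms_comult_def by (auto split: if_splits)
    have "z = y" using cou[of z] counit_unit[of y] y by simp
    thus "b z = ms_unit z" using y by simp
  qed
  let ?X = "coalg_basis b"
  have sub: "\<And>x. {z. b x z \<noteq> 0} \<subseteq> ?X" using supp by (auto simp: coalg_basis_def)
  have xeq: "\<And>x. (\<Sum>z | b x z \<noteq> 0. b x z *s z) = x" using cou by (simp add: ms_counit_def ms_supp_def)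
  have spanX: "\<And>x. x \<in> span ?X"
  proof -
    fix x
    have "(\<Sum>z | b x z \<noteq> 0. b x z *s z) \<in> span ?X"
      using sub[of x] by (intro span_sum span_scale span_base) auto
    thus "x \<in> span ?X" using xeq by simp
  qed
  have indX: "independent ?X"
    unfolding independent_explicit_module
  proof (intro allI impI)
    fix t u v assume ft: "finite t" and tX: "t \<subseteq> ?X" and s0: "(\<Sum>v\<in>t. u v *s v) = 0" and vt: "v \<in> t"
    have "b (\<Sum>v\<in>t. u v *s v) v = (\<Sum>w\<in>t. u w * ms_unit w v)"
      using tX by (simp add: bsum scl coalg_basis_def subset_iff)
    also have "\<dots> = (\<Sum>w\<in>t. if v = w then u w else 0)"
      by (rule sum.cong) (auto simp: ms_unit_def)
    also have "\<dots> = u v" using ft vt by simp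
    finally show "u v = 0" using s0 b0 by simp
  qed
  have "b = representation ?X"
  proof
    fix x
    show "b x = representation ?X x"
      by (rule representation_eqI[OF indX spanX, symmetric]) (use sub fin xeq in auto)
  qed
  thus ?thesis using indX spanX by (auto simp: hamel_basis_def)
qed

lemma main:
  shows "bij_betw (basis_coalg scale) {B. hamel_basis scale B} {b. ms_coalgebra scale b}
       \<and> (\<forall>B. hamel_basis scale B \<longrightarrow> coalg_basis (basis_coalg scale B) = B)
       \<and> (\<forall>b. ms_coalgebra scale b \<longrightarrow>
              hamel_basis scale (coalg_basis b) \<and> b = basis_coalg scale (coalg_basis b))"
proof (intro conjI allI impI)
  show "bij_betw (basis_coalg scale) {B. hamel_basis scale B} {b. ms_coalgebra scale b}"
    unfolding bij_betw_def
  proof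
    show "inj_on (basis_coalg scale) {B. hamel_basis scale B}"
      by (rule inj_onI) (metis partB basis_coalg_def mem_Collect_eq)
    show "basis_coalg scale ` {B. hamel_basis scale B} = {b. ms_coalgebra scale b}"
    proof
      show "basis_coalg scale ` {B. hamel_basis scale B} \<subseteq> {b. ms_coalgebra scale b}"
        using partA by (auto simp: basis_coalg_def)
      show "{b. ms_coalgebra scale b} \<subseteq> basis_coalg scale ` {B. hamel_basis scale B}"
      proof
        fix b assume "b \<in> {b. ms_coalgebra scale b}"
        then have "hamel_basis scale (coalg_basis b) \<and> b = representation (coalg_basis b)"
          using partC by auto
        then show "b \<in> basis_coalg scale ` {B. hamel_basis scale B}"
          unfolding basis_coalg_def by blast
      qed
    qed
  qed
qed (use partB partC in \<open>auto simp: basis_coalg_def\<close>)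

end

theorem theorem3p2:
  fixes sR :: "real \<Rightarrow> 'a::ab_group_add \<Rightarrow> 'a"
    and sC :: "complex \<Rightarrow> 'b::ab_group_add \<Rightarrow> 'b"
  assumes "vector_space sR" and "vector_space sC"
  shows "bij_betw (basis_coalg sR) {B. hamel_basis sR B} {b. ms_coalgebra sR b}
       \<and> (\<forall>B. hamel_basis sR B \<longrightarrow> coalg_basis (basis_coalg sR B) = B)
       \<and> (\<forall>b. ms_coalgebra sR b \<longrightarrow>
              hamel_basis sR (coalg_basis b) \<and> b = basis_coalg sR (coalg_basis b))
       \<and> bij_betw (basis_coalg sC) {B. hamel_basis sC B} {b. ms_coalgebra sC b}
       \<and> (\<forall>B. hamel_basis sC B \<longrightarrow> coalg_basis (basis_coalg sC B) = B)
       \<and> (\<forall>b. ms_coalgebra sC b \<longrightarrow>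
              hamel_basis sC (coalg_basis b) \<and> b = basis_coalg sC (coalg_basis b))"
proof -
  note R = vector_space.main[OF assms(1)]
  note C = vector_space.main[OF assms(2)]
  show ?thesis by (intro conjI) (insert R C, (elim conjE), assumption)+
qed

end
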